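(* Let $\lambda\in\mathbb{Z}_2$ and consider $f(x)=x^2-\lambda$ as a map $\mathbb{Z}_2\to\mathbb{Z}_2$. 1) If $\lambda\equiv 0\pmod 4$, then $f$ has two attracting fixed points, one in $4\mathbb{Z}_2$ with attracting basin $2\mathbb{Z}_2$, and the other in $1+4\mathbb{Z}_2$ with attracting basin $1+2\mathbb{Z}_2$. 2) If $\lambda\equiv 1\pmod 4$, then all of $\mathbb{Z}_2$ is attracted into a periodic orbit of period $2$ with one orbit point in $4\mathbb{Z}_2$ and the other in $3+4\mathbb{Z}_2$. 3) If $\lambda\equiv 2\pmod 4$, then $f$ has two attracting fixed points, one in $2+4\mathbb{Z}_2$ with attracting basin $2\mathbb{Z}_2$, and the other in $3+4\mathbb{Z}_2$ with attracting basin $1+2\mathbb{Z}_2$. 4) If $\lambda\equiv 3\pmod 4$, then all of $\mathbb{Z}_2$ is attracted into a periodic orbit of period $2$ with one orbit point in $1+4\mathbb{Z}_2$ and the other in $2+4\mathbb{Z}_2$.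
   Context: A point $x$ is attracted into a periodic orbit $O$ (or lies in its attracting basin) if the distance from $f^n(x)$ to $O$ tends to $0$ as $n\to\infty$; a fixed point is attracting if it has an open neighbourhood contained in its basin. *)

theory Defs
  imports Complex_Main
begin

text \<open>The ring of 2-adic integers, modelled as the inverse limit of the rings Z/2^n Z:
  an element is a compatible sequence of residues x n in {0..<2^n}.\<close>

typedef z2 = "{x :: nat \<Rightarrow> int. \<forall>n. x n = x (Suc n) mod 2 ^ n}"
  morphisms digits Abs_z2
  by (rule exI[of _ "\<lambda>_. 0"]) simp

definition z2_of_int :: "int \<Rightarrow> z2" where
  "z2_of_int k = Abs_z2 (\<lambda>n. k mod 2 ^ n)"

definition z2_add :: "z2 \<Rightarrow> z2 \<Rightarrow> z2" where
  "z2_add x y = Abs_z2 (\<lambda>n. (digits x n + digits y n) mod 2 ^ n)"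

definition z2_diff :: "z2 \<Rightarrow> z2 \<Rightarrow> z2" where
  "z2_diff x y = Abs_z2 (\<lambda>n. (digits x n - digits y n) mod 2 ^ n)"

definition z2_mult :: "z2 \<Rightarrow> z2 \<Rightarrow> z2" where
  "z2_mult x y = Abs_z2 (\<lambda>n. (digits x n * digits y n) mod 2 ^ n)"

text \<open>2-adic distance: |x - y|_2 = 2^(-v) where v is the 2-adic valuation of x - y,
  i.e. the largest v with x = y (mod 2^v).\<close>
definition z2_dist :: "z2 \<Rightarrow> z2 \<Rightarrow> real" where
  "z2_dist x y = (if x = y then 0
     else (1/2) ^ (LEAST n. digits x (Suc n) \<noteq> digits y (Suc n)))"

definition z2_class :: "int \<Rightarrow> nat \<Rightarrow> z2 set" where
  "z2_class a m = {x. digits x m = a mod 2 ^ m}"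

definition z2_setdist :: "z2 \<Rightarrow> z2 set \<Rightarrow> real" where
  "z2_setdist x Orb = Min ((\<lambda>p. z2_dist x p) ` Orb)"

definition attracted :: "(z2 \<Rightarrow> z2) \<Rightarrow> z2 set \<Rightarrow> z2 \<Rightarrow> bool" where
  "attracted f Orb x \<longleftrightarrow> (\<lambda>n. z2_setdist ((f ^^ n) x) Orb) \<longlonglongrightarrow> 0"

definition basin :: "(z2 \<Rightarrow> z2) \<Rightarrow> z2 set \<Rightarrow> z2 set" where
  "basin f Orb = {x. attracted f Orb x}"

definition attracting_fixed_point :: "(z2 \<Rightarrow> z2) \<Rightarrow> z2 \<Rightarrow> bool" where
  "attracting_fixed_point f p \<longleftrightarrow> f p = p \<and>
     (\<exists>U. (\<forall>y\<in>U. \<exists>e>0. \<forall>z. z2_dist z y < e \<longrightarrow> z \<in> U) \<and> p \<in> U \<and> U \<subseteq> basin f {p})"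

definition period2_orbit :: "(z2 \<Rightarrow> z2) \<Rightarrow> z2 \<Rightarrow> z2 \<Rightarrow> bool" where
  "period2_orbit f a b \<longleftrightarrow> f a = b \<and> f b = a \<and> a \<noteq> b"

end

theory Submission
  imports Defs
begin

lemma digits_prop: "digits x n = digits x (Suc n) mod 2^n"
  using digits[of x] by blast

lemma digits_range: "0 \<le> digits x n \<and> digits x n < 2^n"
proof -
  have "digits x n = digits x (Suc n) mod 2^n" by (rule digits_prop)
  moreover have "0 \<le> digits x (Suc n) mod 2^n \<and> digits x (Suc n) mod 2^n < (2::int)^n" by simp
  ultimately show ?thesis by simp
qed

lemma digits_self_mod: "digits x n mod 2^n = digits x n"
  using digits_range[of x n] by simp

lemma digits_mod_le: "m \<le> n \<Longrightarrow> digits x m = digits x n mod 2^m"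
proof (induction n)
  case 0 then show ?case using digits_self_mod[of x 0] by simp
next
  case (Suc n)
  show ?case
  proof (cases "m \<le> n")
    case True
    have "digits x m = digits x n mod 2^m" using Suc True by simp
    also have "\<dots> = (digits x (Suc n) mod 2^n) mod 2^m" using digits_prop by metis
    also have "\<dots> = digits x (Suc n) mod 2^m"
      by (rule mod_mod_cancel) (simp add: True le_imp_power_dvd)
    finally show ?thesis .
  next
    case False
    then have "m = Suc n" using Suc by simp
    then show ?thesis using digits_self_mod[of x m] by simp
  qed
qed

lemma digits_agree_le: "digits x n = digits y n \<Longrightarrow> m \<le> n \<Longrightarrow> digits x m = digits y m"
  using digits_mod_le by metis

lemma digits_0: "digits x 0 = 0"
  using digits_range[of x 0] by simp

lemma z2_eqI: assumes "\<And>n. digits x (Suc (Suc n)) = digits y (Suc (Suc n))" shows "x = y"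
proof -
  have "digits x n = digits y n" for n
    using digits_agree_le[OF assms[of n], of n] by simp
  then show ?thesis using digits_inject by (metis ext)
qed

lemma digits_Abs: "(\<forall>n. g n = g (Suc n) mod 2^n) \<Longrightarrow> digits (Abs_z2 g) = g"
  by (intro Abs_z2_inverse CollectI)

lemma digits_mult: "digits (z2_mult x y) n = (digits x n * digits y n) mod 2^n"
proof -
  have "(digits x n * digits y n) mod 2^n = ((digits x (Suc n) * digits y (Suc n)) mod 2^Suc n) mod 2^n" for n
  proof -
    have "((digits x (Suc n) * digits y (Suc n)) mod 2^Suc n) mod 2^n = (digits x (Suc n) * digits y (Suc n)) mod 2^n"
      by (rule mod_mod_cancel) (simp add: le_imp_power_dvd)
    also have "\<dots> = ((digits x (Suc n) mod 2^n) * (digits y (Suc n) mod 2^n)) mod 2^n"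
      by (simp add: mod_mult_eq)
    finally show ?thesis using digits_prop by metis
  qed
  then have "digits (Abs_z2 (\<lambda>n. (digits x n * digits y n) mod 2^n)) = (\<lambda>n. (digits x n * digits y n) mod 2^n)"
    by (intro digits_Abs allI) blast
  then show ?thesis unfolding z2_mult_def by (rule fun_cong)
qed

lemma digits_diff: "digits (z2_diff x y) n = (digits x n - digits y n) mod 2^n"
proof -
  have "(digits x n - digits y n) mod 2^n = ((digits x (Suc n) - digits y (Suc n)) mod 2^Suc n) mod 2^n" for n
  proof -
    have "((digits x (Suc n) - digits y (Suc n)) mod 2^Suc n) mod 2^n = (digits x (Suc n) - digits y (Suc n)) mod 2^n"
      by (rule mod_mod_cancel) (simp add: le_imp_power_dvd)
    also have "\<dots> = ((digits x (Suc n) mod 2^n) - (digits y (Suc n) mod 2^n)) mod 2^n"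
      by (simp add: mod_diff_eq)
    finally show ?thesis using digits_prop by metis
  qed
  then have "digits (Abs_z2 (\<lambda>n. (digits x n - digits y n) mod 2^n)) = (\<lambda>n. (digits x n - digits y n) mod 2^n)"
    by (intro digits_Abs allI) blast
  then show ?thesis unfolding z2_diff_def by (rule fun_cong)
qed

definition F :: "z2 \<Rightarrow> z2 \<Rightarrow> z2" where
  "F lam x = z2_diff (z2_mult x x) lam"

lemma digits_F: "digits (F lam x) n = (digits x n * digits x n - digits lam n) mod 2^n"
  unfolding F_def digits_diff digits_mult by (rule mod_diff_left_eq)

lemma F_contract:
  assumes "1 \<le> k" "digits x k = digits y k"
  shows "digits (F lam x) (Suc k) = digits (F lam y) (Suc k)"
proof -
  define X where "X = digits x (Suc k)"
  define Y where "Y = digits y (Suc k)"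
  have "X mod 2^k = Y mod 2^k" using assms(2) digits_prop unfolding X_def Y_def by metis
  then have d1: "2^k dvd X - Y" by (simp add: mod_eq_dvd_iff)
  have "(2::int) dvd 2^k" using assms(1) by (simp add: dvd_power)
  then have "2 dvd X - Y" using d1 dvd_trans by blast
  moreover have "X + Y = (X - Y) + 2*Y" by simp
  ultimately have d2: "2 dvd X + Y" by simp
  have "2^k * 2 dvd (X - Y) * (X + Y)" using d1 d2 by (rule mult_dvd_mono)
  moreover have "(X - Y) * (X + Y) = (X*X - digits lam (Suc k)) - (Y*Y - digits lam (Suc k))"
    by (simp add: algebra_simps)
  moreover have "(2::int)^k * 2 = 2^Suc k" by simp
  ultimately have "2^Suc k dvd (X*X - digits lam (Suc k)) - (Y*Y - digits lam (Suc k))"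
    by metis
  then have "(X*X - digits lam (Suc k)) mod 2^Suc k = (Y*Y - digits lam (Suc k)) mod 2^Suc k"
    by (subst mod_eq_dvd_iff)
  then show ?thesis unfolding digits_F X_def[symmetric] Y_def[symmetric] .
qed


lemma digits_of_int: "digits (z2_of_int k) n = k mod 2^n"
proof -
  have "\<forall>n. k mod 2^n = (k mod 2^Suc n) mod (2::int)^n"
    by (intro allI mod_mod_cancel[symmetric]) (simp add: le_imp_power_dvd)
  then have "digits (Abs_z2 (\<lambda>n. k mod 2^n)) = (\<lambda>n. k mod 2^n)"
    by (intro digits_Abs) blast
  then show ?thesis unfolding z2_of_int_def by (rule fun_cong)
qed

definition contr :: "(z2 \<Rightarrow> z2) \<Rightarrow> bool" where
  "contr g \<longleftrightarrow> (\<forall>x y k. 1 \<le> k \<longrightarrow> digits x k = digits y k \<longrightarrow> digits (g x) (Suc k) = digits (g y) (Suc k))"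

lemma contr_F: "contr (F lam)"
  unfolding contr_def using F_contract by blast

lemma contr_funpow:
  assumes "contr g" "1 \<le> k" "digits x k = digits y k"
  shows "digits ((g^^n) x) (k+n) = digits ((g^^n) y) (k+n)"
proof (induction n)
  case 0 then show ?case using assms by simp
next
  case (Suc n)
  have "1 \<le> k + n" using assms by simp
  then have "digits (g ((g^^n) x)) (Suc (k+n)) = digits (g ((g^^n) y)) (Suc (k+n))"
    using assms(1) Suc unfolding contr_def by blast
  then show ?case by simp
qed

lemma contr_funpow2: assumes "contr g" shows "contr (g^^2)"
  unfolding contr_def
proof (intro allI impI)
  fix x y k assume "1 \<le> (k::nat)" "digits x k = digits y k"
  then have "digits ((g^^2) x) (k+2) = digits ((g^^2) y) (k+2)"
    using contr_funpow[OF assms] by blast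
  then show "digits ((g^^2) x) (Suc k) = digits ((g^^2) y) (Suc k)"
    by (rule digits_agree_le) simp
qed

lemma fix_exists:
  assumes c: "contr g" and x0: "digits (g x0) 1 = digits x0 1"
  shows "\<exists>p. g p = p \<and> digits p 1 = digits x0 1"
proof -
  have C: "digits ((g^^Suc n) x0) (Suc n) = digits ((g^^n) x0) (Suc n)" for n
  proof -
    have "digits ((g^^n) (g x0)) (1+n) = digits ((g^^n) x0) (1+n)"
      using contr_funpow[OF c _ x0] by simp
    then show ?thesis by (simp add: funpow_Suc_right del: funpow.simps)
  qed
  define d where "d n = digits ((g^^n) x0) n" for n
  have compat: "\<forall>n. d n = d (Suc n) mod 2^n"
  proof
    fix n
    have "d (Suc n) mod 2^n = digits ((g^^Suc n) x0) n"
      unfolding d_def using digits_mod_le[of n "Suc n"] by simp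
    also have "\<dots> = digits ((g^^n) x0) n"
      using digits_agree_le[OF C[of n], of n] by simp
    finally show "d n = d (Suc n) mod 2^n" unfolding d_def by simp
  qed
  define p where "p = Abs_z2 d"
  have dp: "digits p = d" unfolding p_def using compat by (rule digits_Abs)
  have "g p = p"
  proof (rule z2_eqI)
    fix n
    define k where "k = Suc n"
    have "digits p k = digits ((g^^k) x0) k" using dp d_def by simp
    moreover have "1 \<le> k" by (simp add: k_def)
    ultimately have "digits (g p) (Suc k) = digits (g ((g^^k) x0)) (Suc k)"
      using c unfolding contr_def by blast
    also have "\<dots> = digits p (Suc k)" using dp d_def by simp
    finally show "digits (g p) (Suc (Suc n)) = digits p (Suc (Suc n))" unfolding k_def .
  qed
  moreover have "digits p 1 = digits x0 1"
    using dp d_def x0 by simp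
  ultimately show ?thesis by blast
qed

lemma dist_nonneg: "0 \<le> z2_dist x y"
  unfolding z2_dist_def by simp

lemma dist_le:
  assumes "digits x k = digits y k"
  shows "z2_dist x y \<le> (1/2)^k"
proof (cases "x = y")
  case True then show ?thesis by (simp add: z2_dist_def)
next
  case False
  then have "digits x \<noteq> digits y" using digits_inject by blast
  then obtain m where m: "digits x m \<noteq> digits y m" by blast
  then have "m \<noteq> 0" using digits_0 by metis
  then obtain j where "m = Suc j" using not0_implies_Suc by blast
  then have ex: "\<exists>j. digits x (Suc j) \<noteq> digits y (Suc j)" using m by blast
  define L where "L = (LEAST j. digits x (Suc j) \<noteq> digits y (Suc j))"
  have L: "digits x (Suc L) \<noteq> digits y (Suc L)" unfolding L_def using LeastI_ex[OF ex] .
  have "k \<le> L"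
  proof (rule ccontr)
    assume "\<not> k \<le> L"
    then have "Suc L \<le> k" by simp
    then show False using digits_agree_le[OF assms] L by blast
  qed
  then have "((1::real)/2)^L \<le> (1/2)^k" by (rule power_decreasing) auto
  then show ?thesis using False unfolding z2_dist_def L_def by simp
qed

lemma dist_one:
  assumes "digits x 1 \<noteq> digits y 1"
  shows "z2_dist x y = 1"
proof -
  have "x \<noteq> y" using assms by blast
  moreover have "(LEAST n. digits x (Suc n) \<noteq> digits y (Suc n)) = 0"
    using assms by (intro Least_eq_0) simp
  ultimately show ?thesis unfolding z2_dist_def by simp
qed

lemma attracted_I:
  assumes fin: "finite Orb" and H: "\<And>n. \<exists>q\<in>Orb. digits ((f^^n) x) (Suc n) = digits q (Suc n)"
  shows "attracted f Orb x"
proof -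
  have ne: "Orb \<noteq> {}" using H[of 0] by blast
  define s where "s n = z2_setdist ((f^^n) x) Orb" for n
  have lo: "0 \<le> s n" for n
    unfolding s_def z2_setdist_def using fin ne dist_nonneg by (simp add: Min_ge_iff)
  have hi: "s n \<le> (1/2)^Suc n" for n
  proof -
    obtain q where o: "q \<in> Orb" "digits ((f^^n) x) (Suc n) = digits q (Suc n)" using H by blast
    have "s n \<le> z2_dist ((f^^n) x) q"
      unfolding s_def z2_setdist_def using fin o(1) by (intro Min_le) auto
    also have "\<dots> \<le> (1/2)^Suc n" using dist_le[OF o(2)] .
    finally show ?thesis .
  qed
  have "(\<lambda>n. ((1::real)/2)^Suc n) \<longlonglongrightarrow> 0"
    using LIMSEQ_Suc[OF LIMSEQ_power_zero[of "(1::real)/2"]] by simp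
  then have "s \<longlonglongrightarrow> 0"
    by (rule tendsto_sandwich[rotated 2, OF tendsto_const]) (use lo hi in auto)
  then show ?thesis unfolding attracted_def s_def by simp
qed

lemma not_attracted:
  assumes "\<And>n. digits ((f^^n) x) 1 \<noteq> digits p 1"
  shows "\<not> attracted f {p} x"
proof
  assume "attracted f {p} x"
  then have "(\<lambda>n. z2_dist ((f^^n) x) p) \<longlonglongrightarrow> 0"
    unfolding attracted_def z2_setdist_def by simp
  moreover have "(\<lambda>n. z2_dist ((f^^n) x) p) = (\<lambda>n. 1)"
    using dist_one assms by auto
  ultimately show False by (simp add: LIMSEQ_const_iff)
qed

lemma digits1_cases: "digits x 1 = 0 \<or> digits x 1 = 1"
  using digits_range[of x 1] by auto

lemma F_par_even: "digits lam 1 = 0 \<Longrightarrow> digits (F lam x) 1 = digits x 1"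
  unfolding digits_F using digits1_cases[of x] by auto

lemma F_par_odd: "digits lam 1 = 1 \<Longrightarrow> digits (F lam x) 1 = 1 - digits x 1"
  unfolding digits_F using digits1_cases[of x] by auto

lemma class1: "c \<in> {0,1} \<Longrightarrow> z2_class c 1 = {x. digits x 1 = c}"
  unfolding z2_class_def by auto

lemma funpow_fix: "g p = p \<Longrightarrow> (g^^n) p = p"
  by (induction n) auto

lemma fixcase:
  assumes lam: "digits lam 1 = 0" and c: "c \<in> {0,1}"
  shows "\<exists>p. F lam p = p \<and> digits p 1 = c \<and> attracting_fixed_point (F lam) p \<and>
              basin (F lam) {p} = z2_class c 1"
proof -
  have "digits (z2_of_int c) 1 = c" using c digits_of_int by auto
  moreover have "digits (F lam (z2_of_int c)) 1 = digits (z2_of_int c) 1"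
    using F_par_even[OF lam] .
  ultimately obtain p where p: "F lam p = p" "digits p 1 = c"
    using fix_exists[OF contr_F] by metis
  have par: "digits ((F lam ^^ n) x) 1 = digits x 1" for n x
  proof (induction n)
    case (Suc n)
    have "digits (F lam ((F lam ^^ n) x)) 1 = digits ((F lam ^^ n) x) 1"
      by (rule F_par_even[OF lam])
    then show ?case using Suc by simp
  qed simp
  have B: "basin (F lam) {p} = z2_class c 1"
  proof
    show "z2_class c 1 \<subseteq> basin (F lam) {p}"
    proof
      fix x assume "x \<in> z2_class c 1"
      then have x1: "digits x 1 = digits p 1" using p c class1 by auto
      have "digits ((F lam ^^ n) x) (Suc n) = digits p (Suc n)" for n
        using contr_funpow[OF contr_F _ x1, of n] funpow_fix[of "F lam" p, OF p(1)] by simp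
      then show "x \<in> basin (F lam) {p}" unfolding basin_def
        by (intro CollectI attracted_I) auto
    qed
  next
    show "basin (F lam) {p} \<subseteq> z2_class c 1"
    proof
      fix x assume "x \<in> basin (F lam) {p}"
      then have "attracted (F lam) {p} x" unfolding basin_def by simp
      then have "\<not> (\<forall>n. digits ((F lam ^^ n) x) 1 \<noteq> digits p 1)"
        using not_attracted by blast
      then have "digits x 1 = digits p 1" using par by simp
      then show "x \<in> z2_class c 1" using p c class1 by auto
    qed
  qed
  have "attracting_fixed_point (F lam) p"
    unfolding attracting_fixed_point_def
  proof (intro conjI exI[of _ "z2_class c 1"])
    show "F lam p = p" by (rule p(1))
    show "p \<in> z2_class c 1" using p c class1 by auto
    show "z2_class c 1 \<subseteq> basin (F lam) {p}" using B by simp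
    show "\<forall>y\<in>z2_class c 1. \<exists>e>0. \<forall>z. z2_dist z y < e \<longrightarrow> z \<in> z2_class c 1"
    proof (intro ballI exI[of _ 1] conjI allI impI)
      fix y z assume y: "y \<in> z2_class c 1" and "z2_dist z y < 1"
      then have "digits z 1 = digits y 1" using dist_one by fastforce
      then show "z \<in> z2_class c 1" using y c class1 by auto
    qed simp
  qed
  then show ?thesis using p B by blast
qed

lemma percase:
  assumes lam: "digits lam 1 = 1" and c: "c \<in> {0,1}"
  shows "\<exists>a b. period2_orbit (F lam) a b \<and> digits a 1 = c \<and> (\<forall>x. attracted (F lam) {a, b} x)"
proof -
  let ?g = "F lam ^^ 2"
  have g: "?g x = F lam (F lam x)" for x by (simp add: numeral_2_eq_2)
  have gpar: "digits (?g x) 1 = digits x 1" for x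
    unfolding g using F_par_odd[OF lam] digits1_cases[of x] by auto
  have "digits (z2_of_int c) 1 = c" using c digits_of_int by auto
  then obtain a where a: "?g a = a" "digits a 1 = c"
    using fix_exists[OF contr_funpow2[OF contr_F] gpar] by metis
  define b where "b = F lam a"
  have ab: "F lam a = b" "F lam b = a" using a g b_def by auto
  have b1: "digits b 1 = 1 - c" using F_par_odd[OF lam] a b_def by simp
  have "a \<noteq> b" using b1 a c by auto
  then have orb: "period2_orbit (F lam) a b" using ab unfolding period2_orbit_def by simp
  have inv: "y \<in> {a,b} \<Longrightarrow> (F lam ^^ n) y \<in> {a,b}" for y n
    by (induction n) (use ab in auto)
  have "attracted (F lam) {a, b} x" for x
  proof -
    define y where "y = (if digits x 1 = c then a else b)"
    have y: "y \<in> {a,b}" unfolding y_def by simp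
    have xy: "digits x 1 = digits y 1"
      unfolding y_def using a b1 c digits1_cases[of x] by auto
    show ?thesis
    proof (rule attracted_I)
      fix n
      have "digits ((F lam ^^ n) x) (Suc n) = digits ((F lam ^^ n) y) (Suc n)"
        using contr_funpow[OF contr_F _ xy, of n] by simp
      then show "\<exists>q\<in>{a, b}. digits ((F lam ^^ n) x) (Suc n) = digits q (Suc n)"
        using inv[OF y, of n] by blast
    qed simp
  qed
  then show ?thesis using orb a by blast
qed

lemma four_cases: "0 \<le> (P::int) \<Longrightarrow> P < 4 \<Longrightarrow> P = 0 \<or> P = 1 \<or> P = 2 \<or> P = 3"
  by arith

lemma d2: "digits x 2 = 0 \<or> digits x 2 = 1 \<or> digits x 2 = 2 \<or> digits x 2 = 3"
  using digits_range[of x 2] four_cases by simp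

lemma d1_of_d2: "digits x 1 = digits x 2 mod 2"
  using digits_mod_le[of 1 2 x] by simp

lemma F2: "digits (F lam x) 2 = (digits x 2 * digits x 2 - digits lam 2) mod 4"
  using digits_F[of lam x 2] by simp

lemma cls2: "digits lam 2 = l \<Longrightarrow> F lam p = q \<Longrightarrow> digits q 2 = (digits p 2 * digits p 2 - l) mod 4"
  using F2 by metis

lemma class2: "x \<in> z2_class a 2 \<longleftrightarrow> digits x 2 = a mod 4"
  unfolding z2_class_def by simp

lemma main_fix:
  assumes "digits lam 2 = l" "l = 0 \<or> l = 2"
  shows "\<exists>p q. attracting_fixed_point (F lam) p \<and> digits p 2 = l \<and> basin (F lam) {p} = z2_class 0 1 \<and>
             attracting_fixed_point (F lam) q \<and> digits q 2 = 1 + l \<and> basin (F lam) {q} = z2_class 1 1"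
proof -
  have l1: "digits lam 1 = 0" using d1_of_d2[of lam] assms by auto
  obtain p where p: "F lam p = p" "digits p 1 = 0" "attracting_fixed_point (F lam) p"
     "basin (F lam) {p} = z2_class 0 1" using fixcase[OF l1, of 0] by auto
  obtain q where q: "F lam q = q" "digits q 1 = 1" "attracting_fixed_point (F lam) q"
     "basin (F lam) {q} = z2_class 1 1" using fixcase[OF l1, of 1] by auto
  have "digits p 2 = l" using cls2[OF assms(1) p(1)] d2[of p] d1_of_d2[of p] p(2) assms(2) by auto
  moreover have "digits q 2 = 1 + l" using cls2[OF assms(1) q(1)] d2[of q] d1_of_d2[of q] q(2) assms(2) by auto
  ultimately show ?thesis using p q by blast
qed

lemma main_per:
  fixes l c :: int
  assumes "digits lam 2 = l" "l = 1 \<or> l = 3" "c = (if l = 1 then 0 else 1)"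
  shows "\<exists>a b. period2_orbit (F lam) a b \<and> digits a 2 = (if l = 1 then 0 else 1) \<and>
             digits b 2 = (if l = 1 then 3 else 2) \<and> (\<forall>x. attracted (F lam) {a, b} x)"
proof -
  have l1: "digits lam 1 = 1" using d1_of_d2[of lam] assms by auto
  have c: "c \<in> {0,1}" using assms by auto
  obtain a b where ab: "period2_orbit (F lam) a b" "digits a 1 = c" "\<forall>x. attracted (F lam) {a, b} x"
    using percase[OF l1 c] by blast
  have fab: "F lam a = b" "F lam b = a" using ab(1) unfolding period2_orbit_def by auto
  have A: "digits b 2 = (digits a 2 * digits a 2 - l) mod 4" by (rule cls2[OF assms(1) fab(1)])
  have B: "digits a 2 = (digits b 2 * digits b 2 - l) mod 4" by (rule cls2[OF assms(1) fab(2)])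
  have "digits b 2 = (if l = 1 then 3 else 2)"
    using A d2[of a] d1_of_d2[of a] ab(2) assms by auto
  moreover then have "digits a 2 = (if l = 1 then 0 else 1)"
    using B assms by auto
  ultimately show ?thesis using ab by blast
qed

theorem theoremD:
  fixes lam :: z2
  defines "f \<equiv> (\<lambda>x. z2_diff (z2_mult x x) lam)"
  shows
   "(lam \<in> z2_class 0 2 \<longrightarrow>
      (\<exists>p q. attracting_fixed_point f p \<and> p \<in> z2_class 0 2 \<and> basin f {p} = z2_class 0 1 \<and>
             attracting_fixed_point f q \<and> q \<in> z2_class 1 2 \<and> basin f {q} = z2_class 1 1))
  \<and> (lam \<in> z2_class 1 2 \<longrightarrow>
      (\<exists>a b. period2_orbit f a b \<and> a \<in> z2_class 0 2 \<and> b \<in> z2_class 3 2 \<and>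
             (\<forall>x. attracted f {a, b} x)))
  \<and> (lam \<in> z2_class 2 2 \<longrightarrow>
      (\<exists>p q. attracting_fixed_point f p \<and> p \<in> z2_class 2 2 \<and> basin f {p} = z2_class 0 1 \<and>
             attracting_fixed_point f q \<and> q \<in> z2_class 3 2 \<and> basin f {q} = z2_class 1 1))
  \<and> (lam \<in> z2_class 3 2 \<longrightarrow>
      (\<exists>a b. period2_orbit f a b \<and> a \<in> z2_class 1 2 \<and> b \<in> z2_class 2 2 \<and>
             (\<forall>x. attracted f {a, b} x)))"
proof -
  have fF: "f = F lam" unfolding f_def F_def[abs_def] by simp
  show ?thesis unfolding fF class2
    using main_fix[of lam 0] main_fix[of lam 2] main_per[of lam 1 0] main_per[of lam 3 1]
    by auto
qed

end
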